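(* Let $L$ be a finite-dimensional Lie algebra over a field $F$. 1. $L$ is primitive if and only if there exists a subalgebra $M$ of $L$ such that $L = M + A$ for every minimal ideal $A$ of $L$. 2. Let $L$ be primitive, let $U$ be a core-free maximal subalgebra of $L$ and let $A$ be a non-trivial ideal of $L$. Put $C = C_L(A)$. Then $C \cap U = 0$, and either $C = 0$ or $C$ is a minimal ideal of $L$. 3. If $L$ is primitive and $U$ is a core-free maximal subalgebra of $L$, then exactly one of the following holds: (a) $\mathrm{Soc}(L) = A$ is a self-centralising abelian minimal ideal of $L$ which is complemented by $U$, i.e. $L = U \dot{+} A$ (vector space direct sum); (b) $\mathrm{Soc}(L) = A$ is a non-abelian minimal ideal of $L$ which is supplemented by $U$, i.e. $L = U + A$, and in this case $C_L(A) = 0$; (c) $\mathrm{Soc}(L) = A \oplus B$, where $A$ and $B$ are the only two minimal ideals of $L$ and both are complemented by $U$, i.e. $L = A \dot{+} U = B \dot{+} U$; in this case $A = C_L(B)$, $B = C_L(A)$, and $A$, $B$ and $(A+B)\cap U$ are pairwise isomorphic non-abelian Lie algebras.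
   Context: All Lie algebras are finite-dimensional over a field $F$. For a subalgebra $U$ of $L$, the core $U_L$ is the largest ideal of $L$ contained in $U$; $U$ is core-free if $U_L = 0$. $L$ is called primitive if it has a core-free maximal subalgebra. $C_L(U) = \{x \in L : [x,U] = 0\}$. $\mathrm{Soc}(L)$ is the sum of all minimal ideals of $L$. An ideal $A$ is self-centralising if $C_L(A) = A$.
   Formalization: In part 1 the subalgebra M must also be core-free (so $M_L = 0$), and L is assumed nonzero throughout. Apart from conventions, each condition added here is assumed in the paper as well or is needed for the statement above to hold. *)

theory Defs
  imports Complex_Main
begin

text \<open>A Lie algebra L over a field F is modelled as the whole type 'v (carrier UNIV),
  with scalar multiplication sc :: 'f \<Rightarrow> 'v \<Rightarrow> 'v and Lie bracket br.\<close>

definition lie_algebra :: "('f::field \<Rightarrow> 'v::ab_group_add \<Rightarrow> 'v) \<Rightarrow> ('v \<Rightarrow> 'v \<Rightarrow> 'v) \<Rightarrow> bool" where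
  "lie_algebra sc br \<longleftrightarrow> vector_space sc \<and>
     (\<forall>x y z. br (x + y) z = br x z + br y z) \<and>
     (\<forall>x y z. br x (y + z) = br x y + br x z) \<and>
     (\<forall>c x y. br (sc c x) y = sc c (br x y)) \<and>
     (\<forall>c x y. br x (sc c y) = sc c (br x y)) \<and>
     (\<forall>x. br x x = 0) \<and>
     (\<forall>x y z. br x (br y z) + br y (br z x) + br z (br x y) = 0)"

definition fin_dim :: "('f::field \<Rightarrow> 'v::ab_group_add \<Rightarrow> 'v) \<Rightarrow> bool" where
  "fin_dim sc \<longleftrightarrow> (\<exists>B. finite B \<and> module.span sc B = UNIV)"

definition ssum :: "'v::ab_group_add set \<Rightarrow> 'v set \<Rightarrow> 'v set" where
  "ssum X Y = {x + y | x y. x \<in> X \<and> y \<in> Y}"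

definition subalgebra :: "('f::field \<Rightarrow> 'v::ab_group_add \<Rightarrow> 'v) \<Rightarrow> ('v \<Rightarrow> 'v \<Rightarrow> 'v) \<Rightarrow> 'v set \<Rightarrow> bool" where
  "subalgebra sc br U \<longleftrightarrow> module.subspace sc U \<and> (\<forall>x\<in>U. \<forall>y\<in>U. br x y \<in> U)"

definition lie_ideal :: "('f::field \<Rightarrow> 'v::ab_group_add \<Rightarrow> 'v) \<Rightarrow> ('v \<Rightarrow> 'v \<Rightarrow> 'v) \<Rightarrow> 'v set \<Rightarrow> bool" where
  "lie_ideal sc br I \<longleftrightarrow> module.subspace sc I \<and> (\<forall>x. \<forall>y\<in>I. br x y \<in> I)"

definition maximal_subalgebra :: "('f::field \<Rightarrow> 'v::ab_group_add \<Rightarrow> 'v) \<Rightarrow> ('v \<Rightarrow> 'v \<Rightarrow> 'v) \<Rightarrow> 'v set \<Rightarrow> bool" where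
  "maximal_subalgebra sc br M \<longleftrightarrow> subalgebra sc br M \<and> M \<noteq> UNIV \<and>
     (\<forall>K. subalgebra sc br K \<and> M \<subseteq> K \<longrightarrow> K = M \<or> K = UNIV)"

definition minimal_ideal :: "('f::field \<Rightarrow> 'v::ab_group_add \<Rightarrow> 'v) \<Rightarrow> ('v \<Rightarrow> 'v \<Rightarrow> 'v) \<Rightarrow> 'v set \<Rightarrow> bool" where
  "minimal_ideal sc br A \<longleftrightarrow> lie_ideal sc br A \<and> A \<noteq> {0} \<and>
     (\<forall>B. lie_ideal sc br B \<and> B \<subseteq> A \<longrightarrow> B = {0} \<or> B = A)"

definition core :: "('f::field \<Rightarrow> 'v::ab_group_add \<Rightarrow> 'v) \<Rightarrow> ('v \<Rightarrow> 'v \<Rightarrow> 'v) \<Rightarrow> 'v set \<Rightarrow> 'v set" where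
  "core sc br U = module.span sc (\<Union>{I. lie_ideal sc br I \<and> I \<subseteq> U})"

definition core_free :: "('f::field \<Rightarrow> 'v::ab_group_add \<Rightarrow> 'v) \<Rightarrow> ('v \<Rightarrow> 'v \<Rightarrow> 'v) \<Rightarrow> 'v set \<Rightarrow> bool" where
  "core_free sc br U \<longleftrightarrow> core sc br U = {0}"

definition primitive :: "('f::field \<Rightarrow> 'v::ab_group_add \<Rightarrow> 'v) \<Rightarrow> ('v \<Rightarrow> 'v \<Rightarrow> 'v) \<Rightarrow> bool" where
  "primitive sc br \<longleftrightarrow> (\<exists>U. maximal_subalgebra sc br U \<and> core_free sc br U)"

definition centraliser :: "('v::zero \<Rightarrow> 'v \<Rightarrow> 'v) \<Rightarrow> 'v set \<Rightarrow> 'v set" where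
  "centraliser br U = {x. \<forall>u\<in>U. br x u = 0}"

definition socle :: "('f::field \<Rightarrow> 'v::ab_group_add \<Rightarrow> 'v) \<Rightarrow> ('v \<Rightarrow> 'v \<Rightarrow> 'v) \<Rightarrow> 'v set" where
  "socle sc br = module.span sc (\<Union>{A. minimal_ideal sc br A})"

definition abelian_set :: "('v::zero \<Rightarrow> 'v \<Rightarrow> 'v) \<Rightarrow> 'v set \<Rightarrow> bool" where
  "abelian_set br X \<longleftrightarrow> (\<forall>x\<in>X. \<forall>y\<in>X. br x y = 0)"

definition lie_iso_sets :: "('f::field \<Rightarrow> 'v::ab_group_add \<Rightarrow> 'v) \<Rightarrow> ('v \<Rightarrow> 'v \<Rightarrow> 'v) \<Rightarrow> 'v set \<Rightarrow> 'v set \<Rightarrow> bool" where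
  "lie_iso_sets sc br X Y \<longleftrightarrow> (\<exists>f. bij_betw f X Y \<and>
     (\<forall>x\<in>X. \<forall>y\<in>X. f (x + y) = f x + f y \<and> f (br x y) = br (f x) (f y)) \<and>
     (\<forall>c. \<forall>x\<in>X. f (sc c x) = sc c (f x)))"

end

theory Submission
  imports Defs
begin

locale LA =
  fixes sc :: "'f::field \<Rightarrow> 'v::ab_group_add \<Rightarrow> 'v"
    and br :: "'v \<Rightarrow> 'v \<Rightarrow> 'v"
  assumes lie: "lie_algebra sc br"
    and fdim: "fin_dim sc"
begin

sublocale vector_space sc using lie by (simp add: lie_algebra_def)

lemma add_l: "br (x + y) z = br x z + br y z" using lie by (simp add: lie_algebra_def)
lemma add_r: "br x (y + z) = br x y + br x z" using lie by (simp add: lie_algebra_def)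
lemma sc_l: "br (sc c x) y = sc c (br x y)" using lie by (simp add: lie_algebra_def)
lemma sc_r: "br x (sc c y) = sc c (br x y)" using lie by (simp add: lie_algebra_def)
lemma alt: "br x x = 0" using lie by (simp add: lie_algebra_def)
lemma jac: "br x (br y z) + br y (br z x) + br z (br x y) = 0" using lie by (simp add: lie_algebra_def)

lemma zero_l[simp]: "br 0 y = 0"
  using add_l[of 0 0 y] by simp
lemma zero_r[simp]: "br y 0 = 0"
  using add_r[of y 0 0] by simp
lemma anti: "br x y = - br y x"
proof -
  have "br (x+y) (x+y) = br x x + br y x + (br x y + br y y)" by (simp only: add_l add_r)
  then have "br y x + br x y = 0" by (simp add: alt)
  then have "br x y + br y x = 0" by (simp add: add.commute)
  then show ?thesis by (simp add: eq_neg_iff_add_eq_0)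
qed
lemma neg_l: "br (- x) y = - br x y"
  using add_l[of x "-x" y] by (simp add: eq_neg_iff_add_eq_0 add.commute)
lemma neg_r: "br y (- x) = - br y x"
  using add_r[of y x "-x"] by (simp add: eq_neg_iff_add_eq_0 add.commute)
lemma diff_l: "br (x - y) z = br x z - br y z"
  using add_l[of x "-y" z] neg_l[of y z] by simp
lemma diff_r: "br z (x - y) = br z x - br z y"
  using add_r[of z x "-y"] neg_r[of z y] by simp

definition Basis where "Basis = (SOME B. independent B \<and> span B = UNIV)"

lemma Basis_props: "independent Basis" "span Basis = UNIV" "finite Basis"
proof -
  obtain B where "B \<subseteq> UNIV" "independent B" "UNIV \<subseteq> span B"
    using maximal_independent_subset by blast
  then have ex: "\<exists>B. independent B \<and> span B = UNIV" by auto
  have h: "independent Basis \<and> span Basis = UNIV"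
    unfolding Basis_def by (rule someI_ex[OF ex])
  then show "independent Basis" "span Basis = UNIV" by auto
  obtain W where W: "finite W" "span W = UNIV" using fdim by (auto simp: fin_dim_def)
  show "finite Basis" using independent_span_bound[OF W(1), of Basis] h W by auto
qed

sublocale fd: finite_dimensional_vector_space sc Basis
  by unfold_locales (auto simp: Basis_props)

lemma ideal_subalg: "lie_ideal sc br I \<Longrightarrow> subalgebra sc br I"
  by (simp add: lie_ideal_def subalgebra_def)

lemma ideal_mem_l: "lie_ideal sc br I \<Longrightarrow> y \<in> I \<Longrightarrow> br y x \<in> I"
  unfolding lie_ideal_def by (metis anti subspace_neg)

lemma ideal_mem_r: "lie_ideal sc br I \<Longrightarrow> y \<in> I \<Longrightarrow> br x y \<in> I"
  unfolding lie_ideal_def by blast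

lemma ideal_sub: "lie_ideal sc br I \<Longrightarrow> subspace I"
  unfolding lie_ideal_def by blast

lemma subalg_sub: "subalgebra sc br I \<Longrightarrow> subspace I"
  unfolding subalgebra_def by blast

lemma centraliser_ideal:
  assumes A: "lie_ideal sc br A"
  shows "lie_ideal sc br (centraliser br A)"
  unfolding lie_ideal_def
proof (intro conjI allI ballI)
  show "subspace (centraliser br A)"
    by (rule subspaceI) (auto simp: centraliser_def add_l sc_l)
  fix x c assume c: "c \<in> centraliser br A"
  show "br x c \<in> centraliser br A"
    unfolding centraliser_def
  proof (intro CollectI ballI)
    fix a assume a: "a \<in> A"
    have "br c a = 0" using c a by (auto simp: centraliser_def)
    moreover have "br c (br a x) = 0" using c ideal_mem_l[OF A a] by (auto simp: centraliser_def)
    moreover note jac[of x c a]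
    ultimately have "br a (br x c) = 0" by simp
    then show "br (br x c) a = 0" by (metis anti neg_equal_0_iff_equal)
  qed
qed

lemma ideal_inter: "lie_ideal sc br A \<Longrightarrow> lie_ideal sc br B \<Longrightarrow> lie_ideal sc br (A \<inter> B)"
  unfolding lie_ideal_def by (auto intro: subspace_inter)

lemma ssum_commute: "ssum A B = ssum B A"
  unfolding ssum_def apply (rule set_eqI) using add.commute by blast

lemma ssum_mem: "x \<in> A \<Longrightarrow> y \<in> B \<Longrightarrow> x + y \<in> ssum A B"
  unfolding ssum_def by blast

lemma ssum_E: "z \<in> ssum A B \<Longrightarrow> (\<And>x y. z = x + y \<Longrightarrow> x \<in> A \<Longrightarrow> y \<in> B \<Longrightarrow> P) \<Longrightarrow> P"
  unfolding ssum_def by blast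

lemma ssum_sub: assumes A: "subspace A" and B: "subspace B" shows "subspace (ssum A B)"
proof (rule subspaceI)
  show "0 \<in> ssum A B" using ssum_mem[OF subspace_0[OF A] subspace_0[OF B]] by simp
next
  fix x y assume "x \<in> ssum A B" "y \<in> ssum A B"
  then obtain a b a' b' where "x = a + b" "a \<in> A" "b \<in> B" "y = a' + b'" "a' \<in> A" "b' \<in> B"
    by (metis ssum_E)
  moreover have "x + y = (a + a') + (b + b')" using calculation by (simp add: algebra_simps)
  ultimately show "x + y \<in> ssum A B" using A B by (metis ssum_mem subspace_add)
next
  fix c x assume "x \<in> ssum A B"
  then obtain a b where "x = a + b" "a \<in> A" "b \<in> B" by (metis ssum_E)
  then show "sc c x \<in> ssum A B" using A B by (metis ssum_mem subspace_scale scale_right_distrib)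
qed

lemma ssum_le: "subspace S \<Longrightarrow> A \<subseteq> S \<Longrightarrow> B \<subseteq> S \<Longrightarrow> ssum A B \<subseteq> S"
  by (auto elim!: ssum_E intro: subspace_add)

lemma ssum_left: "subspace B \<Longrightarrow> A \<subseteq> ssum A B"
  using ssum_mem[of _ A 0 B] subspace_0 by fastforce

lemma ssum_right: "subspace A \<Longrightarrow> B \<subseteq> ssum A B"
  using ssum_mem[of 0 A _ B] subspace_0 by fastforce

lemma ssum_subalg:
  assumes U: "subalgebra sc br U" and A: "lie_ideal sc br A"
  shows "subalgebra sc br (ssum U A)"
  unfolding subalgebra_def
proof (intro conjI ballI)
  show "subspace (ssum U A)" using U A by (simp add: ssum_sub subalg_sub ideal_sub)
  fix x y assume "x \<in> ssum U A" "y \<in> ssum U A"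
  then obtain u a u' a' where x: "x = u + a" "u \<in> U" "a \<in> A" and y: "y = u' + a'" "u' \<in> U" "a' \<in> A"
    unfolding ssum_def by blast
  have "br x y = br u u' + (br u a' + br a u' + br a a')"
    using x y by (simp add: add_l add_r algebra_simps)
  moreover have "br u u' \<in> U" using U x y by (simp add: subalgebra_def)
  moreover have "br u a' + br a u' + br a a' \<in> A"
  proof -
    have "br u a' \<in> A" "br a u' \<in> A" "br a a' \<in> A"
      using A x y ideal_mem_l ideal_mem_r by blast+
    then show ?thesis using ideal_sub[OF A] by (intro subspace_add) auto
  qed
  ultimately show "br x y \<in> ssum U A" unfolding ssum_def by (intro CollectI exI conjI)
qed

lemma core_free_ideal:
  assumes "core_free sc br U" "lie_ideal sc br I" "I \<subseteq> U"
  shows "I = {0}"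
proof -
  have "I \<subseteq> \<Union>{I. lie_ideal sc br I \<and> I \<subseteq> U}" using assms(2,3) by blast
  then have "I \<subseteq> core sc br U" unfolding core_def using span_superset by blast
  then have "I \<subseteq> {0}" using assms(1) unfolding core_free_def by simp
  moreover have "0 \<in> I" using assms(2) ideal_sub subspace_0 by blast
  ultimately show ?thesis by blast
qed

end

context LA begin

lemma exists_minimal:
  assumes I: "lie_ideal sc br I" "I \<noteq> {0}"
  shows "\<exists>A. minimal_ideal sc br A \<and> A \<subseteq> I"
proof -
  define P where "P J \<longleftrightarrow> lie_ideal sc br J \<and> J \<noteq> {0} \<and> J \<subseteq> I" for J
  have "P I" using I by (simp add: P_def)
  then obtain J where J: "P J" and least: "\<And>K. P K \<Longrightarrow> dim J \<le> dim K"
    using ex_has_least_nat[of P I dim] by blast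
  have "minimal_ideal sc br J"
    unfolding minimal_ideal_def
  proof (intro conjI allI impI)
    show "lie_ideal sc br J" "J \<noteq> {0}" using J by (auto simp: P_def)
    fix B assume B: "lie_ideal sc br B \<and> B \<subseteq> J"
    show "B = {0} \<or> B = J"
    proof (cases "B = {0}")
      case True then show ?thesis by simp
    next
      case False
      then have "P B" using B J by (auto simp: P_def)
      then have "dim J \<le> dim B" by (rule least)
      then show ?thesis using fd.subspace_dim_equal[of B J] B J ideal_sub by (auto simp: P_def)
    qed
  qed
  then show ?thesis using J by (auto simp: P_def)
qed

lemma exists_maximal:
  assumes M: "subalgebra sc br M" "M \<noteq> UNIV"
  shows "\<exists>U. maximal_subalgebra sc br U \<and> M \<subseteq> U"
proof -
  define P where "P K \<longleftrightarrow> subalgebra sc br K \<and> K \<noteq> UNIV \<and> M \<subseteq> K" for K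
  have "P M" using M by (simp add: P_def)
  then obtain U where U: "P U" and least: "\<And>K. P K \<Longrightarrow> fd.dimension - dim U \<le> fd.dimension - dim K"
    using ex_has_least_nat[of P M "\<lambda>K. fd.dimension - dim K"] by blast
  have "maximal_subalgebra sc br U"
    unfolding maximal_subalgebra_def
  proof (intro conjI allI impI)
    show "subalgebra sc br U" "U \<noteq> UNIV" using U by (auto simp: P_def)
    fix K assume K: "subalgebra sc br K \<and> U \<subseteq> K"
    show "K = U \<or> K = UNIV"
    proof (rule disjCI)
      assume "K \<noteq> UNIV"
      then have "P K" using K U by (auto simp: P_def)
      then have "fd.dimension - dim U \<le> fd.dimension - dim K" by (rule least)
      moreover have "dim K \<le> fd.dimension" "dim U \<le> dim K"
        using fd.dim_subset_UNIV fd.dim_subset K by auto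
      ultimately have "dim K \<le> dim U" by linarith
      then show "K = U" using fd.subspace_dim_equal[of U K] K U subalg_sub by (auto simp: P_def)
    qed
  qed
  then show ?thesis using U by (auto simp: P_def)
qed

lemma min_ideal: "minimal_ideal sc br A \<Longrightarrow> lie_ideal sc br A"
  by (simp add: minimal_ideal_def)
lemma min_ne: "minimal_ideal sc br A \<Longrightarrow> A \<noteq> {0}"
  by (simp add: minimal_ideal_def)
lemma min_eq: "minimal_ideal sc br A \<Longrightarrow> lie_ideal sc br I \<Longrightarrow> I \<subseteq> A \<Longrightarrow> I \<noteq> {0} \<Longrightarrow> I = A"
  unfolding minimal_ideal_def by blast

lemma min_disj:
  assumes A: "minimal_ideal sc br A" and B: "minimal_ideal sc br B" and ne: "A \<noteq> B"
  shows "A \<inter> B = {0}"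
proof (rule ccontr)
  assume "A \<inter> B \<noteq> {0}"
  then have "A \<inter> B = A" using min_eq[OF A ideal_inter[OF min_ideal[OF A] min_ideal[OF B]]] by blast
  then have "A \<subseteq> B" by blast
  then have "A = B" using min_eq[OF B min_ideal[OF A]] min_ne[OF A] by blast
  with ne show False by simp
qed

lemma min_comm:
  assumes A: "minimal_ideal sc br A" and B: "minimal_ideal sc br B" and ne: "A \<noteq> B"
    and a: "a \<in> A" and b: "b \<in> B"
  shows "br a b = 0"
proof -
  have "br a b \<in> A" using ideal_mem_l[OF min_ideal[OF A] a] .
  moreover have "br a b \<in> B" using ideal_mem_r[OF min_ideal[OF B] b] .
  ultimately show ?thesis using min_disj[OF A B ne] by blast
qed

lemma min_in_centr:
  assumes A: "minimal_ideal sc br A" and B: "minimal_ideal sc br B" and ne: "A \<noteq> B"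
  shows "B \<subseteq> centraliser br A"
  unfolding centraliser_def using min_comm[OF B A] ne by blast

lemma sum_univ:
  assumes U: "maximal_subalgebra sc br U" and cf: "core_free sc br U"
    and A: "lie_ideal sc br A" "A \<noteq> {0}"
  shows "ssum U A = UNIV"
proof -
  have Us: "subalgebra sc br U" using U by (simp add: maximal_subalgebra_def)
  have S: "subalgebra sc br (ssum U A)" by (rule ssum_subalg[OF Us A(1)])
  have "U \<subseteq> ssum U A" using ssum_left ideal_sub[OF A(1)] by blast
  then have "ssum U A = U \<or> ssum U A = UNIV" using U S by (simp add: maximal_subalgebra_def)
  moreover have "ssum U A \<noteq> U"
  proof
    assume "ssum U A = U"
    then have "A \<subseteq> U" using ssum_right[OF subalg_sub[OF Us]] by blast
    then show False using core_free_ideal[OF cf A(1)] A(2) by blast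
  qed
  ultimately show ?thesis by blast
qed

lemma modular:
  assumes "ssum U K = UNIV" "K \<subseteq> C" "C \<inter> U = {0}" "subspace C"
  shows "C \<subseteq> K"
proof
  fix c assume c: "c \<in> C"
  have "c \<in> ssum U K" using assms(1) by simp
  then obtain u k where uk: "c = u + k" "u \<in> U" "k \<in> K" by (metis ssum_E)
  then have "u = c - k" by (simp add: algebra_simps)
  then have "u \<in> C" using c uk assms(2,4) subspace_diff by blast
  then have "u = 0" using uk assms(3) by blast
  then show "c \<in> K" using uk by simp
qed

lemma part2:
  assumes U: "maximal_subalgebra sc br U" and cf: "core_free sc br U"
    and A: "lie_ideal sc br A" "A \<noteq> {0}"
  shows "centraliser br A \<inter> U = {0}"
    and "centraliser br A = {0} \<or> minimal_ideal sc br (centraliser br A)"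
proof -
  define C where "C = centraliser br A"
  have CI: "lie_ideal sc br C" unfolding C_def by (rule centraliser_ideal[OF A(1)])
  have Us: "subalgebra sc br U" using U by (simp add: maximal_subalgebra_def)
  have SU: "ssum U A = UNIV" by (rule sum_univ[OF U cf A])
  have "lie_ideal sc br (C \<inter> U)"
    unfolding lie_ideal_def
  proof (intro conjI allI ballI)
    show "subspace (C \<inter> U)" using ideal_sub[OF CI] subalg_sub[OF Us] by (rule subspace_inter)
    fix x y assume y: "y \<in> C \<inter> U"
    have "x \<in> ssum U A" using SU by simp
    then obtain u a where ua: "x = u + a" "u \<in> U" "a \<in> A" by (metis ssum_E)
    have "br y a = 0" using y ua unfolding C_def centraliser_def by blast
    then have "br a y = 0" using anti[of a y] by simp
    then have "br x y = br u y" using ua by (simp add: add_l)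
    moreover have "br u y \<in> C" using ideal_mem_r[OF CI] y by blast
    moreover have "br u y \<in> U" using Us y ua by (simp add: subalgebra_def)
    ultimately show "br x y \<in> C \<inter> U" by simp
  qed
  then have CU: "C \<inter> U = {0}" using core_free_ideal[OF cf] by blast
  then show "centraliser br A \<inter> U = {0}" by (simp add: C_def)
  show "centraliser br A = {0} \<or> minimal_ideal sc br (centraliser br A)"
  proof (cases "C = {0}")
    case True then show ?thesis by (simp add: C_def)
  next
    case False
    then have C0: "C \<noteq> {0}" .
    have "minimal_ideal sc br C"
      unfolding minimal_ideal_def
    proof (intro conjI allI impI CI C0)
      fix B assume B: "lie_ideal sc br B \<and> B \<subseteq> C"
      show "B = {0} \<or> B = C"
      proof (cases "B = {0}")
        case True then show ?thesis by simp
      next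
        case False
        then have "ssum U B = UNIV" using sum_univ[OF U cf] B by blast
        then have "C \<subseteq> B" using modular[of U B C] B CU ideal_sub[OF CI] by blast
        then show ?thesis using B by blast
      qed
    qed
    then show ?thesis by (simp add: C_def)
  qed
qed

end

context LA begin

definition proj :: "'v set \<Rightarrow> 'v set \<Rightarrow> 'v \<Rightarrow> 'v" where
  "proj A B w = (THE a. a \<in> A \<and> w - a \<in> B)"

lemma proj_eq:
  assumes "subspace A" "subspace B" "A \<inter> B = {0}" "a \<in> A" "b \<in> B"
  shows "proj A B (a + b) = a"
  unfolding proj_def
proof (rule the_equality)
  show "a \<in> A \<and> a + b - a \<in> B" using assms by simp
  fix a' assume a': "a' \<in> A \<and> a + b - a' \<in> B"
  have "a - a' \<in> A" using assms a' subspace_diff by blast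
  moreover have "(a + b - a') - b \<in> B" using assms a' subspace_diff by blast
  moreover have "(a + b - a') - b = a - a'" by (simp add: algebra_simps)
  ultimately have "a - a' \<in> A \<inter> B" by simp
  then have "a - a' = 0" using assms(3) by blast
  then show "a' = a" by simp
qed

lemma subalg_inter: "subalgebra sc br X \<Longrightarrow> subalgebra sc br Y \<Longrightarrow> subalgebra sc br (X \<inter> Y)"
  unfolding subalgebra_def by (auto intro: subspace_inter)

lemma iso_W:
  assumes A: "lie_ideal sc br A" and B: "lie_ideal sc br B" and AB: "A \<inter> B = {0}"
    and BU: "B \<inter> U = {0}" and comm: "\<And>a b. a \<in> A \<Longrightarrow> b \<in> B \<Longrightarrow> br a b = 0"
    and SBU: "ssum B U = UNIV" and Us: "subspace U"
  shows "lie_iso_sets sc br (ssum A B \<inter> U) A"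
proof -
  have As: "subspace A" and Bs: "subspace B" using A B ideal_sub by auto
  let ?W = "ssum A B \<inter> U"
  let ?f = "proj A B"
  have comm2: "br b a = 0" if "a \<in> A" "b \<in> B" for a b
    using comm[OF that] anti[of b a] by simp
  have dec: "\<exists>a b. w = a + b \<and> a \<in> A \<and> b \<in> B \<and> ?f w = a" if "w \<in> ?W" for w
  proof -
    have "w \<in> ssum A B" using that by simp
    then obtain a b where ab: "w = a + b" "a \<in> A" "b \<in> B" by (rule ssum_E)
    moreover have "?f w = a" using ab proj_eq[OF As Bs AB ab(2,3)] by simp
    ultimately show ?thesis by blast
  qed
  have inj: "inj_on ?f ?W"
  proof (rule inj_onI)
    fix w w' assume w: "w \<in> ?W" and w': "w' \<in> ?W" and eq: "?f w = ?f w'"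
    obtain a b where ab: "w = a + b" "a \<in> A" "b \<in> B" "?f w = a" using dec[OF w] by blast
    obtain a' b' where ab': "w' = a' + b'" "a' \<in> A" "b' \<in> B" "?f w' = a'" using dec[OF w'] by blast
    have "a = a'" using ab ab' eq by simp
    then have "w - w' = b - b'" using ab ab' by simp
    moreover have "b - b' \<in> B" using ab ab' Bs subspace_diff by blast
    moreover have "w - w' \<in> U" using w w' Us subspace_diff by blast
    ultimately have "w - w' \<in> B \<inter> U" by simp
    then have "w - w' = 0" using BU by blast
    then show "w = w'" by simp
  qed
  have img: "?f ` ?W = A"
  proof
    show "?f ` ?W \<subseteq> A"
    proof
      fix z assume "z \<in> ?f ` ?W"
      then obtain w where w: "w \<in> ?W" "z = ?f w" by (rule imageE) simp
      obtain a b where "w = a + b" "a \<in> A" "b \<in> B" "?f w = a" using dec[OF w(1)] by blast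
      then show "z \<in> A" using w by simp
    qed
    show "A \<subseteq> ?f ` ?W"
    proof
      fix a assume a: "a \<in> A"
      have "a \<in> ssum B U" using SBU by simp
      then obtain b u where bu: "a = b + u" "b \<in> B" "u \<in> U" by (rule ssum_E)
      have u: "u = a + (- b)" using bu by (simp add: algebra_simps)
      have "- b \<in> B" using bu Bs subspace_neg by blast
      then have "a + (- b) \<in> ssum A B" using a by (rule ssum_mem[rotated])
      then have "u \<in> ?W" using u bu(3) by simp
      moreover have "?f u = a" using u proj_eq[OF As Bs AB a \<open>- b \<in> B\<close>] by simp
      ultimately show "a \<in> ?f ` ?W" using rev_image_eqI[of u ?W a ?f] by simp
    qed
  qed
  have hom: "?f (x + y) = ?f x + ?f y \<and> ?f (br x y) = br (?f x) (?f y)" if xW: "x \<in> ?W" and yW: "y \<in> ?W" for x y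
  proof -
    obtain a b where ab: "x = a + b" "a \<in> A" "b \<in> B" "?f x = a" using dec[OF xW] by blast
    obtain a' b' where ab': "y = a' + b'" "a' \<in> A" "b' \<in> B" "?f y = a'" using dec[OF yW] by blast
    have "x + y = (a + a') + (b + b')" using ab ab' by (simp add: algebra_simps)
    moreover have "a + a' \<in> A" "b + b' \<in> B" using ab ab' As Bs subspace_add by blast+
    ultimately have 1: "?f (x + y) = ?f x + ?f y" using proj_eq[OF As Bs AB \<open>a + a' \<in> A\<close> \<open>b + b' \<in> B\<close>] ab(4) ab'(4) by simp
    have "br x y = br a a' + br a b' + (br b a' + br b b')" using ab ab' by (simp add: add_l add_r)
    also have "\<dots> = br a a' + br b b'" using comm[of a b'] comm2[of a' b] ab ab' by simp
    finally have "br x y = br a a' + br b b'" .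
    moreover have "br a a' \<in> A" "br b b' \<in> B" using ab ab' A B ideal_mem_r by blast+
    moreover have "br a a' \<in> A" using ab ab' A ideal_mem_r by blast
    moreover have "br b b' \<in> B" using ab ab' B ideal_mem_r by blast
    ultimately have 2: "?f (br x y) = br (?f x) (?f y)" using proj_eq[OF As Bs AB \<open>br a a' \<in> A\<close> \<open>br b b' \<in> B\<close>] ab(4) ab'(4) by simp
    show ?thesis using 1 2 by simp
  qed
  have scl: "?f (sc c x) = sc c (?f x)" if xW: "x \<in> ?W" for c x
  proof -
    obtain a b where ab: "x = a + b" "a \<in> A" "b \<in> B" "?f x = a" using dec[OF xW] by blast
    have "sc c x = sc c a + sc c b" using ab by (simp add: scale_right_distrib)
    moreover have "sc c a \<in> A" "sc c b \<in> B" using ab As Bs subspace_scale by blast+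
    ultimately show ?thesis using proj_eq[OF As Bs AB \<open>sc c a \<in> A\<close> \<open>sc c b \<in> B\<close>] ab(4) by simp
  qed
  show ?thesis unfolding lie_iso_sets_def bij_betw_def
    apply (rule exI[of _ ?f]) using inj img hom scl by simp
qed

lemma iso_sym:
  assumes X: "subalgebra sc br X" and iso: "lie_iso_sets sc br X Y"
  shows "lie_iso_sets sc br Y X"
proof -
  obtain f where bij: "bij_betw f X Y"
    and hom: "\<And>x y. x \<in> X \<Longrightarrow> y \<in> X \<Longrightarrow> f (x + y) = f x + f y \<and> f (br x y) = br (f x) (f y)"
    and scl: "\<And>c x. x \<in> X \<Longrightarrow> f (sc c x) = sc c (f x)"
    using iso unfolding lie_iso_sets_def by blast
  define g where "g = the_inv_into X f"
  have gb: "bij_betw g Y X" unfolding g_def by (rule bij_betw_the_inv_into[OF bij])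
  have inj: "inj_on f X" using bij by (simp add: bij_betw_def)
  have gf: "g (f x) = x" if "x \<in> X" for x unfolding g_def using the_inv_into_f_f[OF inj that] .
  have fg: "y \<in> Y \<Longrightarrow> f (g y) = y" and gY: "y \<in> Y \<Longrightarrow> g y \<in> X" for y
    using gb bij unfolding g_def
    by (auto simp: bij_betw_def f_the_inv_into_f the_inv_into_into)
  have Xs: "subspace X" using X subalg_sub by blast
  have "\<forall>x\<in>Y. \<forall>y\<in>Y. g (x + y) = g x + g y \<and> g (br x y) = br (g x) (g y)"
  proof (intro ballI conjI)
    fix x y assume x: "x \<in> Y" and y: "y \<in> Y"
    have "f (g x + g y) = x + y" using hom[OF gY[OF x] gY[OF y]] fg x y by simp
    moreover have "g x + g y \<in> X" using gY x y Xs subspace_add by blast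
    ultimately show "g (x + y) = g x + g y" using gf[of "g x + g y"] by simp
    have "f (br (g x) (g y)) = br x y" using hom[OF gY[OF x] gY[OF y]] fg x y by simp
    moreover have "br (g x) (g y) \<in> X" using gY x y X by (simp add: subalgebra_def)
    ultimately show "g (br x y) = br (g x) (g y)" using gf[of "br (g x) (g y)"] by simp
  qed
  moreover have "\<forall>c. \<forall>x\<in>Y. g (sc c x) = sc c (g x)"
  proof (intro allI ballI)
    fix c x assume x: "x \<in> Y"
    have "f (sc c (g x)) = sc c x" using scl[OF gY[OF x]] fg x by simp
    moreover have "sc c (g x) \<in> X" using gY x Xs subspace_scale by blast
    ultimately show "g (sc c x) = sc c (g x)" using gf[of "sc c (g x)"] by simp
  qed
  ultimately show ?thesis unfolding lie_iso_sets_def using gb by (intro exI[of _ g]) simp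
qed

lemma iso_trans:
  assumes "lie_iso_sets sc br X Y" "lie_iso_sets sc br Y Z"
  shows "lie_iso_sets sc br X Z"
proof -
  obtain f where f: "bij_betw f X Y"
    "\<And>x y. x \<in> X \<Longrightarrow> y \<in> X \<Longrightarrow> f (x + y) = f x + f y \<and> f (br x y) = br (f x) (f y)"
    "\<And>c x. x \<in> X \<Longrightarrow> f (sc c x) = sc c (f x)"
    using assms(1) unfolding lie_iso_sets_def by blast
  obtain g where g: "bij_betw g Y Z"
    "\<And>x y. x \<in> Y \<Longrightarrow> y \<in> Y \<Longrightarrow> g (x + y) = g x + g y \<and> g (br x y) = br (g x) (g y)"
    "\<And>c x. x \<in> Y \<Longrightarrow> g (sc c x) = sc c (g x)"
    using assms(2) unfolding lie_iso_sets_def by blast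
  have fY: "x \<in> X \<Longrightarrow> f x \<in> Y" for x using f(1) bij_betwE by blast
  have "bij_betw (g \<circ> f) X Z" using f(1) g(1) by (rule bij_betw_trans)
  moreover have "\<forall>x\<in>X. \<forall>y\<in>X. (g \<circ> f) (x + y) = (g \<circ> f) x + (g \<circ> f) y \<and>
      (g \<circ> f) (br x y) = br ((g \<circ> f) x) ((g \<circ> f) y)"
    using f(2) g(2) fY by simp
  moreover have "\<forall>c. \<forall>x\<in>X. (g \<circ> f) (sc c x) = sc c ((g \<circ> f) x)"
    using f(3) g(3) fY by simp
  ultimately show ?thesis unfolding lie_iso_sets_def by (intro exI[of _ "g \<circ> f"]) simp
qed

lemma iso_abelian:
  assumes "lie_iso_sets sc br X Y" "abelian_set br X"
  shows "abelian_set br Y"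
proof -
  obtain f where f: "bij_betw f X Y"
    "\<And>x y. x \<in> X \<Longrightarrow> y \<in> X \<Longrightarrow> f (x + y) = f x + f y \<and> f (br x y) = br (f x) (f y)"
    using assms(1) unfolding lie_iso_sets_def by blast
  show ?thesis unfolding abelian_set_def
  proof (intro ballI)
    fix y y' assume "y \<in> Y" "y' \<in> Y"
    then obtain x x' where x: "x \<in> X" "x' \<in> X" "y = f x" "y' = f x'"
      using f(1) by (metis bij_betw_imp_surj_on imageE)
    have "br y y' = f (br x x')" using f(2) x by simp
    also have "\<dots> = f (br x x)" using assms(2) x unfolding abelian_set_def by simp
    also have "\<dots> = br y y" using f(2) x by simp
    also have "\<dots> = 0" by (rule alt)
    finally show "br y y' = 0" .
  qed
qed

end

context LA begin

definition PA where "PA U \<longleftrightarrow> (\<exists>A. socle sc br = A \<and> minimal_ideal sc br A \<and> abelian_set br A \<and>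
                   centraliser br A = A \<and> ssum U A = UNIV \<and> U \<inter> A = {0})"
definition PB where "PB U \<longleftrightarrow> (\<exists>A. socle sc br = A \<and> minimal_ideal sc br A \<and> \<not> abelian_set br A \<and>
                   ssum U A = UNIV \<and> centraliser br A = {0})"
definition PC where "PC U \<longleftrightarrow> (\<exists>A B. socle sc br = ssum A B \<and> A \<inter> B = {0} \<and>
                   minimal_ideal sc br A \<and> minimal_ideal sc br B \<and> A \<noteq> B \<and>
                   (\<forall>I. minimal_ideal sc br I \<longrightarrow> I = A \<or> I = B) \<and>
                   ssum A U = UNIV \<and> A \<inter> U = {0} \<and>
                   ssum B U = UNIV \<and> B \<inter> U = {0} \<and>
                   A = centraliser br B \<and> B = centraliser br A \<and>
                   \<not> abelian_set br A \<and> \<not> abelian_set br B \<and>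
                   \<not> abelian_set br (ssum A B \<inter> U) \<and>
                   lie_iso_sets sc br A B \<and>
                   lie_iso_sets sc br A (ssum A B \<inter> U) \<and>
                   lie_iso_sets sc br B (ssum A B \<inter> U))"

lemma notPC_if:
  assumes S: "socle sc br = S" "minimal_ideal sc br S"
  shows "\<not> PC U"
proof
  assume "PC U"
  then have "\<exists>A B. socle sc br = ssum A B \<and> minimal_ideal sc br A \<and> minimal_ideal sc br B \<and> A \<noteq> B"
    unfolding PC_def by (elim exE conjE) (intro exI conjI, assumption+)
  then obtain A B where AB: "socle sc br = ssum A B" "minimal_ideal sc br A" "minimal_ideal sc br B" "A \<noteq> B"
    by blast
  have As: "subspace A" and Bs: "subspace B" using AB min_ideal ideal_sub by blast+
  have "A \<subseteq> S" using ssum_left[OF Bs] AB(1) S(1) by blast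
  then have "A = S" using min_eq[OF S(2) min_ideal[OF AB(2)]] min_ne[OF AB(2)] by blast
  moreover have "B \<subseteq> S" using ssum_right[OF As] AB(1) S(1) by blast
  then have "B = S" using min_eq[OF S(2) min_ideal[OF AB(3)]] min_ne[OF AB(3)] by blast
  ultimately show False using AB(4) by simp
qed

lemma socle_single:
  assumes A: "minimal_ideal sc br A" and all: "\<And>I. minimal_ideal sc br I \<Longrightarrow> I = A"
  shows "socle sc br = A"
proof -
  have "\<Union>{A. minimal_ideal sc br A} = A" using A all by blast
  then show ?thesis unfolding socle_def using ideal_sub[OF min_ideal[OF A]] by simp
qed

lemma socle_two:
  assumes A: "minimal_ideal sc br A" and B: "minimal_ideal sc br B"
    and all: "\<And>I. minimal_ideal sc br I \<Longrightarrow> I = A \<or> I = B"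
  shows "socle sc br = ssum A B"
proof -
  have "\<Union>{A. minimal_ideal sc br A} = A \<union> B" using A B all by blast
  moreover have "span A = A" "span B = B" using A B min_ideal ideal_sub by auto
  ultimately have "span (A \<union> B) = ssum A B" unfolding ssum_def using span_Un[of A B] by (simp only:)
  then show ?thesis unfolding socle_def using \<open>\<Union>{A. minimal_ideal sc br A} = A \<union> B\<close> by simp
qed

lemma ideal_UNIV: "lie_ideal sc br UNIV"
  by (simp add: lie_ideal_def)

lemma part3:
  assumes U: "maximal_subalgebra sc br U" and cf: "core_free sc br U"
    and nt: "(UNIV :: 'v set) \<noteq> {0}"
  shows "(PA U \<and> \<not> PB U \<and> \<not> PC U) \<or> (\<not> PA U \<and> PB U \<and> \<not> PC U) \<or> (\<not> PA U \<and> \<not> PB U \<and> PC U)"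
proof -
  have Us: "subalgebra sc br U" using U by (simp add: maximal_subalgebra_def)
  obtain A where A: "minimal_ideal sc br A" using exists_minimal[OF ideal_UNIV nt] by blast
  have Ai: "lie_ideal sc br A" and A0: "A \<noteq> {0}" using A min_ideal min_ne by auto
  define C where "C = centraliser br A"
  have CU: "C \<inter> U = {0}" and Cm: "C = {0} \<or> minimal_ideal sc br C"
    using part2[OF U cf Ai A0] by (auto simp: C_def)
  have SUA: "ssum U A = UNIV" using sum_univ[OF U cf Ai A0] .
  show ?thesis
  proof (cases "abelian_set br A")
    case True
    then have "A \<subseteq> C" unfolding C_def centraliser_def abelian_set_def by blast
    then have "C \<noteq> {0}" using A0 Ai ideal_sub subspace_0 by blast
    then have Cmin: "minimal_ideal sc br C" using Cm by simp
    have AC: "A = C" using min_eq[OF Cmin Ai \<open>A \<subseteq> C\<close> A0] .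
    have all: "I = A" if I: "minimal_ideal sc br I" for I
    proof (rule ccontr)
      assume "I \<noteq> A"
      then have "I \<subseteq> C" unfolding C_def using min_in_centr[OF A I] by blast
      then show False using min_eq[OF A min_ideal[OF I]] AC min_ne[OF I] \<open>I \<noteq> A\<close> by blast
    qed
    have soc: "socle sc br = A" by (rule socle_single[OF A all])
    have cA: "centraliser br A = A" using AC unfolding C_def by (rule sym)
    have UA: "U \<inter> A = {0}" using CU AC by blast
    have "PA U" unfolding PA_def
      using soc A True cA SUA UA by (intro exI[of _ A] conjI) assumption+
    moreover have "\<not> PB U" unfolding PB_def using soc True by blast
    moreover have "\<not> PC U" by (rule notPC_if[OF soc A])
    ultimately show ?thesis by blast
  next
    case nab: False
    show ?thesis
    proof (cases "C = {0}")
      case True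
      have all: "I = A" if I: "minimal_ideal sc br I" for I
      proof (rule ccontr)
        assume "I \<noteq> A"
        then have "I \<subseteq> C" unfolding C_def using min_in_centr[OF A I] by blast
        then show False using True min_ne[OF I] min_ideal[OF I] ideal_sub subspace_0 by blast
      qed
      have soc: "socle sc br = A" by (rule socle_single[OF A all])
      have cA: "centraliser br A = {0}" using True unfolding C_def .
      have "PB U" unfolding PB_def
        using soc A nab SUA cA by (intro exI[of _ A] conjI) assumption+
      moreover have "\<not> PA U" unfolding PA_def using soc nab by blast
      moreover have "\<not> PC U" by (rule notPC_if[OF soc A])
      ultimately show ?thesis by blast
    next
      case False
      define B where "B = C"
      have Bm: "minimal_ideal sc br B" using Cm False by (simp add: B_def)
      have Bi: "lie_ideal sc br B" and B0: "B \<noteq> {0}" using Bm min_ideal min_ne by auto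
      have BA: "B \<noteq> A"
      proof
        assume "B = A"
        then have "\<forall>x\<in>A. \<forall>y\<in>A. br x y = 0" unfolding B_def C_def centraliser_def by blast
        then show False using nab unfolding abelian_set_def by blast
      qed
      have AinCB: "A \<subseteq> centraliser br B" using min_in_centr[OF Bm A] BA by blast
      have CBU: "centraliser br B \<inter> U = {0}" and CBm: "centraliser br B = {0} \<or> minimal_ideal sc br (centraliser br B)"
        using part2[OF U cf Bi B0] by auto
      have "centraliser br B \<noteq> {0}" using AinCB A0 Ai ideal_sub subspace_0 by blast
      then have CBmin: "minimal_ideal sc br (centraliser br B)" using CBm by simp
      have ACB: "A = centraliser br B" using min_eq[OF CBmin Ai AinCB A0] .
      have BCA: "B = centraliser br A" by (simp add: B_def C_def)
      have nabB: "\<not> abelian_set br B"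
      proof
        assume "abelian_set br B"
        then have "B \<subseteq> centraliser br B" unfolding centraliser_def abelian_set_def by blast
        then have "B \<subseteq> A" using ACB by simp
        then have "B = A" using min_eq[OF A Bi _ B0] by blast
        then show False using BA by simp
      qed
      have allmin: "I = A \<or> I = B" if I: "minimal_ideal sc br I" for I
      proof (rule disjCI)
        assume "I \<noteq> B"
        show "I = A"
        proof (rule ccontr)
          assume "I \<noteq> A"
          then have "I \<subseteq> B" unfolding B_def C_def using min_in_centr[OF A I] by blast
          then show False using min_eq[OF Bm min_ideal[OF I] _ min_ne[OF I]] \<open>I \<noteq> B\<close> by blast
        qed
      qed
      have AB0: "A \<inter> B = {0}" using min_disj[OF A Bm] BA by blast
      have soc: "socle sc br = ssum A B" by (rule socle_two[OF A Bm allmin])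
      have BA': "A \<noteq> B" using BA by blast
      have SAU: "ssum A U = UNIV" using SUA ssum_commute[of A U] by simp
      have SBU: "ssum B U = UNIV" using sum_univ[OF U cf Bi B0] ssum_commute[of B U] by simp
      have AU: "A \<inter> U = {0}" using CBU ACB by simp
      have BU: "B \<inter> U = {0}" using CU B_def by simp
      have commAB: "br a b = 0" if "a \<in> A" "b \<in> B" for a b
        using that AinCB unfolding centraliser_def by blast
      have commBA: "br b a = 0" if "b \<in> B" "a \<in> A" for a b
        using that unfolding B_def C_def centraliser_def by blast
      have WA: "lie_iso_sets sc br (ssum A B \<inter> U) A"
        by (rule iso_W[OF Ai Bi AB0 BU commAB SBU subalg_sub[OF Us]])
      have WB': "lie_iso_sets sc br (ssum B A \<inter> U) B"
        by (rule iso_W[OF Bi Ai _ AU commBA SAU subalg_sub[OF Us]]) (use AB0 in blast)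
      have WB: "lie_iso_sets sc br (ssum A B \<inter> U) B" using WB' ssum_commute[of B A] by simp
      have Wsub: "subalgebra sc br (ssum A B \<inter> U)"
        by (rule subalg_inter[OF ssum_subalg[OF ideal_subalg[OF Ai] Bi] Us])
      have AW: "lie_iso_sets sc br A (ssum A B \<inter> U)" by (rule iso_sym[OF Wsub WA])
      have BW: "lie_iso_sets sc br B (ssum A B \<inter> U)" by (rule iso_sym[OF Wsub WB])
      have AB: "lie_iso_sets sc br A B" by (rule iso_trans[OF AW WB])
      have nabW: "\<not> abelian_set br (ssum A B \<inter> U)"
        using iso_abelian[OF WA] nab by blast
      have "PC U" unfolding PC_def
        apply (rule exI[of _ A], rule exI[of _ B])
        using soc AB0 A Bm BA' SAU AU SBU BU ACB BCA nab nabB nabW AB AW BW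
        by (intro conjI allI impI) (assumption | rule allmin)+
      moreover have "\<not> PA U"
      proof
        assume "PA U"
        then obtain S where "socle sc br = S" "minimal_ideal sc br S" unfolding PA_def by (elim exE conjE) simp
        then show False using notPC_if \<open>PC U\<close> by blast
      qed
      moreover have "\<not> PB U"
      proof
        assume "PB U"
        then obtain S where "socle sc br = S" "minimal_ideal sc br S" unfolding PB_def by (elim exE conjE) simp
        then show False using notPC_if \<open>PC U\<close> by blast
      qed
      ultimately show ?thesis by blast
    qed
  qed
qed

lemma part1:
  assumes nt: "(UNIV :: 'v set) \<noteq> {0}"
  shows "primitive sc br \<longleftrightarrow>
       (\<exists>M. subalgebra sc br M \<and> core_free sc br M \<and>
            (\<forall>A. minimal_ideal sc br A \<longrightarrow> ssum M A = UNIV))"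
proof
  assume "primitive sc br"
  then obtain U where U: "maximal_subalgebra sc br U" "core_free sc br U" unfolding primitive_def by blast
  have "\<forall>A. minimal_ideal sc br A \<longrightarrow> ssum U A = UNIV"
    using sum_univ[OF U] min_ideal min_ne by blast
  then show "\<exists>M. subalgebra sc br M \<and> core_free sc br M \<and>
            (\<forall>A. minimal_ideal sc br A \<longrightarrow> ssum M A = UNIV)"
    using U by (auto simp: maximal_subalgebra_def)
next
  assume "\<exists>M. subalgebra sc br M \<and> core_free sc br M \<and>
            (\<forall>A. minimal_ideal sc br A \<longrightarrow> ssum M A = UNIV)"
  then obtain M where M: "subalgebra sc br M" "core_free sc br M"
    and MA: "\<And>A. minimal_ideal sc br A \<Longrightarrow> ssum M A = UNIV" by blast
  have "M \<noteq> UNIV"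
  proof
    assume "M = UNIV"
    then have "UNIV = {0::'v}" using core_free_ideal[OF M(2) ideal_UNIV] by simp
    then show False using nt by simp
  qed
  then obtain U where U: "maximal_subalgebra sc br U" "M \<subseteq> U" using exists_maximal[OF M(1)] by blast
  have Us: "subalgebra sc br U" using U by (simp add: maximal_subalgebra_def)
  have "core_free sc br U"
  proof (rule ccontr)
    assume ncf: "\<not> core_free sc br U"
    have "\<exists>I. lie_ideal sc br I \<and> I \<subseteq> U \<and> I \<noteq> {0}"
    proof (rule ccontr)
      assume "\<not> ?thesis"
      then have "\<Union>{I. lie_ideal sc br I \<and> I \<subseteq> U} \<subseteq> {0}" by blast
      then have "core sc br U \<subseteq> {0}" unfolding core_def by (rule span_minimal) simp
      then have "core sc br U = {0}" using span_zero unfolding core_def by blast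
      then show False using ncf by (simp add: core_free_def)
    qed
    then obtain I where I: "lie_ideal sc br I" "I \<subseteq> U" "I \<noteq> {0}" by blast
    obtain A where A: "minimal_ideal sc br A" "A \<subseteq> I" using exists_minimal[OF I(1) I(3)] by blast
    have "ssum M A \<subseteq> U" using ssum_le[OF subalg_sub[OF Us]] U(2) A(2) I(2) by blast
    then have "U = UNIV" using MA[OF A(1)] by blast
    then show False using U(1) by (simp add: maximal_subalgebra_def)
  qed
  then show "primitive sc br" unfolding primitive_def using U(1) by blast
qed

end

theorem theorem1p1:
  fixes sc :: "'f::field \<Rightarrow> 'v::ab_group_add \<Rightarrow> 'v"
    and br :: "'v \<Rightarrow> 'v \<Rightarrow> 'v"
  assumes lie: "lie_algebra sc br"
    and fd: "fin_dim sc"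
    and nontriv: "(UNIV :: 'v set) \<noteq> {0}"
  shows
   "(primitive sc br \<longleftrightarrow>
       (\<exists>M. subalgebra sc br M \<and> core_free sc br M \<and>
            (\<forall>A. minimal_ideal sc br A \<longrightarrow> ssum M A = UNIV)))
   \<and> (\<forall>U A. primitive sc br \<and> maximal_subalgebra sc br U \<and> core_free sc br U
          \<and> lie_ideal sc br A \<and> A \<noteq> {0} \<longrightarrow>
          centraliser br A \<inter> U = {0} \<and>
          (centraliser br A = {0} \<or> minimal_ideal sc br (centraliser br A)))
   \<and> (\<forall>U. primitive sc br \<and> maximal_subalgebra sc br U \<and> core_free sc br U \<longrightarrow>
       (let
          Pa = (\<exists>A. socle sc br = A \<and> minimal_ideal sc br A \<and> abelian_set br A \<and>
                   centraliser br A = A \<and> ssum U A = UNIV \<and> U \<inter> A = {0});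
          Pb = (\<exists>A. socle sc br = A \<and> minimal_ideal sc br A \<and> \<not> abelian_set br A \<and>
                   ssum U A = UNIV \<and> centraliser br A = {0});
          Pc = (\<exists>A B. socle sc br = ssum A B \<and> A \<inter> B = {0} \<and>
                   minimal_ideal sc br A \<and> minimal_ideal sc br B \<and> A \<noteq> B \<and>
                   (\<forall>I. minimal_ideal sc br I \<longrightarrow> I = A \<or> I = B) \<and>
                   ssum A U = UNIV \<and> A \<inter> U = {0} \<and>
                   ssum B U = UNIV \<and> B \<inter> U = {0} \<and>
                   A = centraliser br B \<and> B = centraliser br A \<and>
                   \<not> abelian_set br A \<and> \<not> abelian_set br B \<and>
                   \<not> abelian_set br (ssum A B \<inter> U) \<and>
                   lie_iso_sets sc br A B \<and>
                   lie_iso_sets sc br A (ssum A B \<inter> U) \<and>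
                   lie_iso_sets sc br B (ssum A B \<inter> U))
        in (Pa \<and> \<not> Pb \<and> \<not> Pc) \<or> (\<not> Pa \<and> Pb \<and> \<not> Pc) \<or> (\<not> Pa \<and> \<not> Pb \<and> Pc)))"
proof -
  interpret LA sc br using lie fd by unfold_locales
  have p1: "primitive sc br \<longleftrightarrow>
       (\<exists>M. subalgebra sc br M \<and> core_free sc br M \<and>
            (\<forall>A. minimal_ideal sc br A \<longrightarrow> ssum M A = UNIV))" by (rule part1[OF nontriv])
  have p2: "\<forall>U A. primitive sc br \<and> maximal_subalgebra sc br U \<and> core_free sc br U
          \<and> lie_ideal sc br A \<and> A \<noteq> {0} \<longrightarrow>
          centraliser br A \<inter> U = {0} \<and>
          (centraliser br A = {0} \<or> minimal_ideal sc br (centraliser br A))"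
    using part2 by blast
  have p3: "(PA U \<and> \<not> PB U \<and> \<not> PC U) \<or> (\<not> PA U \<and> PB U \<and> \<not> PC U) \<or> (\<not> PA U \<and> \<not> PB U \<and> PC U)"
    if "primitive sc br \<and> maximal_subalgebra sc br U \<and> core_free sc br U" for U
    using part3[of U] that nontriv by blast
  show ?thesis
    unfolding Let_def
    apply (intro conjI)
      apply (rule p1)
     apply (rule p2)
    apply (intro allI impI)
    apply (drule p3)
    unfolding PA_def PB_def PC_def
    apply assumption
    done
qed

end
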